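(* Let $(\mathcal{X},S_0)$ be a rational elliptic surface with section whose singular fibres are exactly six fibres of type $I_2$. Consider its double cover representation $g:Z\to\mathbb{F}_2$, branched over the $(-2)$-section $B$ and a trisection $T\in|3B+6F|$. Then $T$ splits as $T=T_1+T_2+T_3$ into three distinct sections $T_1,T_2,T_3$, each of self-intersection $2$ and each a member of $|B+2F|$; any two of them meet in two distinct points, and the three do not all pass through a common point, so that $T$ has six nodes.
   Context: A rational elliptic surface with section is a pair $(\mathcal{X},S_0)$ with $\mathcal{X}$ a smooth rational complex projective surface with a relatively minimal genus-one fibration $f:\mathcal{X}\to\mathbb{P}^1$ and $S_0$ a section. A fibre of type $I_2$ consists of two smooth rational curves meeting transversally at two points. Double cover representation: $\mathbb{F}_2=\mathbb{P}(\mathcal{O}_{\mathbb{P}^1}\oplus\mathcal{O}_{\mathbb{P}^1}(2))$ with $B$ its negative section ($B^2=-2$) and $F$ the fibre class. Writing the Weierstrass model of $(\mathcal{X},S_0)$ as $y^2=x^3+A(t)x+B(t)$ with $\deg A\le 4$, $\deg B\le 6$, the curve $T=\{x^3+A(t)x+B(t)=0\}$ is a trisection in $|3B+6F|$ disjoint from $B$, $Z$ is the double cover of $\mathbb{F}_2$ branched along $B+T$, $\mathcal{X}$ is the minimal resolution of $Z$, the fibration is pulled back from the ruling of $\mathbb{F}_2$, and $S_0$ is the preimage of $B$. *)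

theory Defs
  imports "HOL-Computational_Algebra.Polynomial" "HOL-Library.Extended_Nat" Complex_Main
begin

text \<open>Points of the base curve P^1: Some t is the affine point t, None is the point at infinity.
  A polynomial p of degree at most d in the affine coordinate t is read as a binary form of
  degree d (a section of O(d) on P^1); its vanishing order at infinity is d - degree p.\<close>

definition ordP :: "nat \<Rightarrow> complex poly \<Rightarrow> complex option \<Rightarrow> enat" where
  "ordP d p pt = (if p = 0 then \<infinity> else
     (case pt of Some t \<Rightarrow> enat (order t p) | None \<Rightarrow> enat (d - degree p)))"

text \<open>Discriminant of the Weierstrass model y^2 = x^3 + A(t) x + B(t), a form of degree 12.\<close>
definition wdisc :: "complex poly \<Rightarrow> complex poly \<Rightarrow> complex poly" where
  "wdisc A B = smult 4 (A ^ 3) + smult 27 (B ^ 2)"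

definition singular_fibre :: "complex poly \<Rightarrow> complex poly \<Rightarrow> complex option \<Rightarrow> bool" where
  "singular_fibre A B pt \<longleftrightarrow> ordP 12 (wdisc A B) pt > 0"

text \<open>Kodaira type I_2 (Tate's algorithm): ord A = ord B = 0 and ord Delta = 2.\<close>
definition fibre_I2 :: "complex poly \<Rightarrow> complex poly \<Rightarrow> complex option \<Rightarrow> bool" where
  "fibre_I2 A B pt \<longleftrightarrow> ordP 4 A pt = 0 \<and> ordP 6 B pt = 0 \<and> ordP 12 (wdisc A B) pt = 2"

text \<open>Intersection points (on the base P^1) of the sections x = a(t) and x = b(t) of F_2,
  a, b sections of O(2), i.e. members of |B + 2F|.\<close>
definition meet_points :: "complex poly \<Rightarrow> complex poly \<Rightarrow> complex option set" where
  "meet_points a b = {pt. ordP 2 (a - b) pt > 0}"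

end

theory Submission imports Defs "HOL-Computational_Algebra.Fundamental_Theorem_Algebra" begin

lemma poly_kth_power:
  fixes p :: "complex poly"
  assumes k: "k > 0" and dv: "\<And>z. k dvd order z p"
  shows "\<exists>q. p = q ^ k"
proof -
  obtain c where c: "c ^ k = lead_coeff p" using nth_root_exists[OF k] by blast
  define m where "m = (\<lambda>z. order z p div k)"
  have om: "order z p = k * m z" for z using dv[of z] by (simp add: m_def)
  have "p = smult (lead_coeff p) (\<Prod>z|poly p z = 0. [:-z, 1:] ^ order z p)"
    by (rule complex_poly_decompose[symmetric])
  also have "(\<Prod>z|poly p z = 0. [:-z, 1:] ^ order z p) = (\<Prod>z|poly p z = 0. [:-z, 1:] ^ m z) ^ k"
    by (simp add: om power_mult[symmetric] prod_power_distrib mult.commute)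
  also have "smult (lead_coeff p) (\<dots>) = (smult c (\<Prod>z|poly p z = 0. [:-z, 1:] ^ m z)) ^ k"
    by (simp add: smult_power c)
  finally show ?thesis by blast
qed

lemma order_cube:
  fixes A :: "complex poly"
  assumes "A \<noteq> 0"
  shows "order z (A ^ 3) = 3 * order z A"
proof -
  have "A ^ 3 = A * (A * A)" by (simp add: power3_eq_cube)
  moreover have "order z (A * (A * A)) = order z A + (order z A + order z A)"
    using assms by (simp add: order_mult)
  ultimately show ?thesis by simp
qed

lemma cube_of_coprime:
  fixes P P' A :: "complex poly"
  assumes prod: "P * P' = smult c (A ^ 3)" and c: "c \<noteq> 0"
    and cop: "\<And>a. poly P a = 0 \<Longrightarrow> poly P' a = 0 \<Longrightarrow> False"
  shows "\<exists>w. P = w ^ 3"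
proof (cases "P = 0")
  case True then show ?thesis by (intro exI[of _ 0]) simp
next
  case PnZ: False
  have "3 dvd order z P" for z
  proof (cases "poly P z = 0")
    case False then show ?thesis by (simp add: order_0I)
  next
    case True
    then have pz: "poly P' z \<noteq> 0" using cop by blast
    then have P'nz: "P' \<noteq> 0" by auto
    have nz: "P * P' \<noteq> 0" using PnZ P'nz by simp
    then have Anz: "A \<noteq> 0" using prod by auto
    have "order z (P * P') = order z P" using nz by (simp add: order_mult order_0I[OF pz])
    also have "order z (P * P') = 3 * order z A" using prod c Anz by (simp add: order_smult order_cube)
    finally show ?thesis by (metis dvd_triv_left)
  qed
  then show ?thesis using poly_kth_power[of 3 P] by simp
qed

definition ordN :: "nat \<Rightarrow> complex poly \<Rightarrow> complex option \<Rightarrow> nat" where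
  "ordN d p pt = (case pt of Some t \<Rightarrow> order t p | None \<Rightarrow> d - degree p)"

lemma ordP_ordN: "p \<noteq> 0 \<Longrightarrow> ordP d p pt = enat (ordN d p pt)"
  by (simp add: ordP_def ordN_def split: option.splits)

lemma meet_card_le:
  fixes p :: "complex poly"
  assumes "p \<noteq> 0" "degree p \<le> 2"
  shows "finite {pt. ordP 2 p pt > 0} \<and> card {pt. ordP 2 p pt > 0} \<le> 2"
proof -
  have eq: "{pt. ordP 2 p pt > 0} = Some ` {a. poly p a = 0} \<union> (if degree p < 2 then {None} else {})"
  proof (intro set_eqI iffI)
    fix pt assume "pt \<in> {pt. ordP 2 p pt > 0}"
    then show "pt \<in> Some ` {a. poly p a = 0} \<union> (if degree p < 2 then {None} else {})"
      using assms by (cases pt) (auto simp: ordP_def order_root enat_0_iff)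
  next
    fix pt assume "pt \<in> Some ` {a. poly p a = 0} \<union> (if degree p < 2 then {None} else {})"
    then show "pt \<in> {pt. ordP 2 p pt > 0}"
      using assms by (cases pt) (auto simp: ordP_def order_root enat_0_iff split: if_splits)
  qed
  have fin: "finite {a. poly p a = 0}" using assms poly_roots_finite by blast
  have cr: "card {a. poly p a = 0} \<le> degree p" using assms card_poly_roots_bound by blast
  have "card {pt. ordP 2 p pt > 0} \<le> card (Some ` {a. poly p a = 0}) + card (if degree p < 2 then {None} else ({} :: complex option set))"
    unfolding eq by (rule card_Un_le)
  also have "\<dots> \<le> card {a. poly p a = 0} + (if degree p < 2 then 1 else 0)"
    by (auto intro: card_image_le[OF fin])
  also have "\<dots> \<le> 2" using cr assms(2) by auto
  finally show ?thesis using eq fin by auto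
qed

lemma omega_facts:
  defines "\<omega> \<equiv> (-1 + \<i> * complex_of_real (sqrt 3)) / 2"
  shows "\<omega>^2 + \<omega> + 1 = 0"
proof -
  have "(complex_of_real (sqrt 3))^2 = 3" by (simp flip: of_real_power)
  then show ?thesis unfolding \<omega>_def by (simp add: power2_eq_square field_simps)
qed

lemma poly_cube_eq:
  fixes x y :: "complex poly"
  assumes "\<Omega>^2 + \<Omega> + 1 = 0" "x ^ 3 = y ^ 3"
  shows "x = y \<or> x = \<Omega> * y \<or> x = \<Omega>^2 * y"
proof -
  have "(x - y) * (x - \<Omega> * y) * (x - \<Omega>^2 * y) = x^3 - y^3"
    using assms(1) by algebra
  then have "(x - y) * (x - \<Omega> * y) * (x - \<Omega>^2 * y) = 0" using assms(2) by simp
  then show ?thesis by auto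
qed

theorem proposition2p3:
  fixes A B :: "complex poly"
  assumes degA: "degree A \<le> 4" and degB: "degree B \<le> 6"
    and six: "card {pt. singular_fibre A B pt} = 6"
    and allI2: "\<forall>pt. singular_fibre A B pt \<longrightarrow> fibre_I2 A B pt"
  shows "\<exists>T1 T2 T3 :: complex poly.
           degree T1 \<le> 2 \<and> degree T2 \<le> 2 \<and> degree T3 \<le> 2
         \<and> (\<forall>t x. x ^ 3 + poly A t * x + poly B t
                    = (x - poly T1 t) * (x - poly T2 t) * (x - poly T3 t))
         \<and> T1 \<noteq> T2 \<and> T1 \<noteq> T3 \<and> T2 \<noteq> T3
         \<and> card (meet_points T1 T2) = 2 \<and> card (meet_points T1 T3) = 2
         \<and> card (meet_points T2 T3) = 2
         \<and> meet_points T1 T2 \<inter> meet_points T1 T3 \<inter> meet_points T2 T3 = {}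
         \<and> card (meet_points T1 T2 \<union> meet_points T1 T3 \<union> meet_points T2 T3) = 6"
proof -
  define D where "D = wdisc A B"
  have Dnz: "D \<noteq> 0"
  proof
    assume "D = 0"
    then have "{pt. singular_fibre A B pt} = UNIV"
      by (auto simp: singular_fibre_def D_def ordP_def)
    moreover have "infinite (UNIV :: complex option set)"
      by (simp add: infinite_UNIV_char_0)
    ultimately show False using six by simp
  qed
  have degD: "degree D \<le> 12"
  proof -
    have "degree (A ^ 3) \<le> 12"
      using degA degree_power_le[of A 3] by linarith
    moreover have "degree (B ^ 2) \<le> 12"
      using degB degree_power_le[of B 2] by linarith
    ultimately show ?thesis unfolding D_def wdisc_def
      by (meson degree_add_le degree_smult_le order_trans)
  qed
  have singI: "order a D = 2 \<and> poly B a \<noteq> 0" if "poly D a = 0" for a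
  proof -
    have "order a D > 0" using that Dnz order_root by blast
    then have "singular_fibre A B (Some a)"
      using Dnz by (simp add: singular_fibre_def ordP_def D_def[symmetric] enat_0_iff)
    then have "fibre_I2 A B (Some a)" using allI2 by blast
    then have "ordP 12 D (Some a) = 2" "ordP 6 B (Some a) = 0"
      by (auto simp: fibre_I2_def D_def)
    then have "order a D = 2" "B \<noteq> 0 \<and> order a B = 0" using Dnz
      by (auto simp: ordP_def enat_0_iff numeral_eq_enat split: if_splits)
    then show ?thesis using order_root by blast
  qed
  have "2 dvd order z D" for z
    using singI[of z] order_0I[of D z] by (cases "poly D z = 0") auto
  then obtain q where q: "D = q ^ 2" using poly_kth_power[of 2 D] by auto
  obtain \<kappa> :: complex where \<kappa>: "\<kappa> ^ 2 = 1/27" using nth_root_exists[of 2 "1/27::complex"] by auto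
  define s where "s = smult \<kappa> q"
  define P1 where "P1 = smult (1/2) (s - B)"
  define P2 where "P2 = smult (-1/2) (s + B)"
  have s2: "s ^ 2 = smult (1/27) D"
    unfolding s_def q by (metis \<kappa> smult_power)
  have s2p: "(poly s t)^2 = poly D t / 27" for t
    using arg_cong[OF s2, of "\<lambda>p. poly p t"] by simp
  have Dp: "poly D t = 4 * (poly A t)^3 + 27 * (poly B t)^2" for t
    by (simp add: D_def wdisc_def)
  have H1: "P1 + P2 = - B"
    by (simp add: P1_def P2_def poly_eq_poly_eq_iff[symmetric] fun_eq_iff algebra_simps)
  have H2: "P1 * P2 = smult (-1/27) (A ^ 3)"
  proof -
    have "poly (P1 * P2) t = poly (smult (-1/27) (A ^ 3)) t" for t
    proof -
      have "poly (P1 * P2) t = - ((poly s t)^2 - (poly B t)^2) / 4"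
        by (simp add: P1_def P2_def power2_eq_square algebra_simps)
      also have "\<dots> = poly (smult (-1/27) (A ^ 3)) t"
        by (simp add: s2p Dp field_simps)
      finally show ?thesis .
    qed
    then show ?thesis by (simp add: poly_eq_poly_eq_iff[symmetric] fun_eq_iff)
  qed
  have cop: "False" if "poly P1 a = 0" "poly P2 a = 0" for a
  proof -
    have "poly B a = 0" using arg_cong[OF H1, of "\<lambda>p. poly p a"] that by simp
    moreover have "poly s a = 0" using that \<open>poly B a = 0\<close> by (simp add: P1_def)
    ultimately have "poly D a = 0" using s2p[of a] by simp
    then show False using singI \<open>poly B a = 0\<close> by blast
  qed
  obtain u where u: "P1 = u ^ 3"
    using cube_of_coprime[OF H2] cop by fastforce
  obtain v0 where v0: "P2 = v0 ^ 3"
    using cube_of_coprime[of P2 P1 "-1/27" A] H2 cop by (fastforce simp: mult.commute)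
  define \<omega> :: complex where "\<omega> = (-1 + \<i> * complex_of_real (sqrt 3)) / 2"
  have w: "\<omega>^2 + \<omega> + 1 = 0" unfolding \<omega>_def by (rule omega_facts)
  have w3: "\<omega>^3 = 1"
  proof -
    have "\<omega>^3 - 1 = (\<omega> - 1) * (\<omega>^2 + \<omega> + 1)" by algebra
    then show ?thesis using w by simp
  qed
  have W: "[:\<omega>:]^2 + [:\<omega>:] + 1 = 0"
    by (simp add: poly_eq_poly_eq_iff[symmetric] fun_eq_iff w)
  define y where "y = smult (-1/3) A"
  have xy: "(u*v0)^3 = y^3"
  proof -
    have "(u*v0)^3 = P1 * P2" by (simp add: u v0 power_mult_distrib)
    also have "\<dots> = smult ((-1/3)^3) (A^3)" using H2 by (simp add: power_divide)
    also have "\<dots> = y^3" unfolding y_def by (rule smult_power[symmetric])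
    finally show ?thesis .
  qed
  have "\<exists>v. u * v = y \<and> v^3 = P2"
  proof -
    from poly_cube_eq[OF W xy] consider "u*v0 = y" | "u*v0 = [:\<omega>:]*y" | "u*v0 = [:\<omega>:]^2*y" by blast
    then show ?thesis
    proof cases
      case 1 then show ?thesis using v0 by blast
    next
      case 2
      have "u * ([:\<omega>:]^2 * v0) = y" using 2 W by algebra
      moreover have "([:\<omega>:]^2 * v0)^3 = P2" using v0 W by algebra
      ultimately show ?thesis by blast
    next
      case 3
      have "u * ([:\<omega>:] * v0) = y" using 3 W by algebra
      moreover have "([:\<omega>:] * v0)^3 = P2" using v0 W by algebra
      ultimately show ?thesis by blast
    qed
  qed
  then obtain v where uv: "u * v = y" and v: "v^3 = P2" by blast
  have Ap: "poly A t = -3 * poly u t * poly v t" for t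
    using arg_cong[OF uv, of "\<lambda>p. poly p t"] by (simp add: y_def) (simp add: field_simps)
  have Bp: "poly B t = - ((poly u t)^3 + (poly v t)^3)" for t
  proof -
    have "u^3 + v^3 = - B" using H1 u v by simp
    from arg_cong[OF this, of "\<lambda>p. poly p t"] show ?thesis by (simp add: algebra_simps)
  qed
  define T1 where "T1 = u + v"
  define T2 where "T2 = smult \<omega> u + smult (\<omega>^2) v"
  define T3 where "T3 = smult (\<omega>^2) u + smult \<omega> v"
  have ident: "\<forall>t x. x ^ 3 + poly A t * x + poly B t
                    = (x - poly T1 t) * (x - poly T2 t) * (x - poly T3 t)"
  proof (intro allI)
    fix t x
    show "x ^ 3 + poly A t * x + poly B t = (x - poly T1 t) * (x - poly T2 t) * (x - poly T3 t)"
      unfolding Ap Bp T1_def T2_def T3_def using w by simp algebra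
  qed
  define R where "R = (T1 - T2) * (T1 - T3) * (T2 - T3)"
  have DR: "D = - (R^2)"
  proof -
    have "poly D t = - ((poly R t)^2)" for t
      unfolding Dp Ap Bp R_def T1_def T2_def T3_def using w by simp algebra
    then show ?thesis by (simp add: poly_eq_poly_eq_iff[symmetric] fun_eq_iff)
  qed
  have qnz: "q \<noteq> 0" using Dnz q by auto
  have "degree D = 2 * degree q" using q qnz by (simp add: degree_power_eq)
  then have degq: "degree q \<le> 6" using degD by simp
  have degs: "degree s \<le> 6" using degq degree_smult_le[of \<kappa> q] unfolding s_def by linarith
  have degP1: "degree P1 \<le> 6" unfolding P1_def
    using degs degB degree_smult_le[of "1/2" "s - B"] degree_diff_le_max[of s B] by linarith
  have degP2: "degree P2 \<le> 6" unfolding P2_def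
    using degs degB degree_smult_le[of "-1/2" "s + B"] degree_add_le_max[of s B] by linarith
  have cube_deg: "degree w \<le> 2" if "degree (w^3) \<le> 6" for w :: "complex poly"
  proof (cases "w = 0")
    case False then show ?thesis using that by (simp add: degree_power_eq)
  qed simp
  have degu: "degree u \<le> 2" using cube_deg degP1 u by simp
  have degv: "degree v \<le> 2" using cube_deg degP2 v by simp
  have deg1: "degree T1 \<le> 2" unfolding T1_def using degu degv degree_add_le by blast
  have deg2: "degree T2 \<le> 2" unfolding T2_def
    using degu degv degree_smult_le[of \<omega> u] degree_smult_le[of "\<omega>^2" v]
    by (meson degree_add_le order_trans)
  have deg3: "degree T3 \<le> 2" unfolding T3_def
    using degu degv degree_smult_le[of \<omega> v] degree_smult_le[of "\<omega>^2" u]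
    by (meson degree_add_le order_trans)
  define d12 where "d12 = T1 - T2"
  define d13 where "d13 = T1 - T3"
  define d23 where "d23 = T2 - T3"
  have Rd: "R = d12 * d13 * d23" by (simp add: R_def d12_def d13_def d23_def)
  have Rnz: "R \<noteq> 0" using Dnz DR by auto
  have nz: "d12 \<noteq> 0" "d13 \<noteq> 0" "d23 \<noteq> 0" using Rnz Rd by auto
  have dg: "degree d12 \<le> 2" "degree d13 \<le> 2" "degree d23 \<le> 2"
    unfolding d12_def d13_def d23_def using deg1 deg2 deg3 degree_diff_le by blast+
  have key: "ordN 12 D pt = 2 * (ordN 2 d12 pt + ordN 2 d13 pt + ordN 2 d23 pt)" for pt
  proof (cases pt)
    case None
    have "degree D = degree (R^2)" using DR by simp
    also have "\<dots> = 2 * degree R" using Rnz by (simp add: degree_power_eq)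
    also have "degree R = degree d12 + degree d13 + degree d23"
      using nz Rd by (simp add: degree_mult_eq)
    finally show ?thesis using None dg by (simp add: ordN_def)
  next
    case (Some a)
    have "order a D = order a (smult (-1) (R^2))" using DR by simp
    also have "\<dots> = order a (R * R)" by (simp add: order_smult power2_eq_square)
    also have "\<dots> = 2 * order a R" using Rnz by (simp add: order_mult)
    also have "order a R = order a d12 + order a d13 + order a d23"
      using nz Rd by (simp add: order_mult)
    finally show ?thesis using Some by (simp add: ordN_def)
  qed
  define M12 where "M12 = meet_points T1 T2"
  define M13 where "M13 = meet_points T1 T3"
  define M23 where "M23 = meet_points T2 T3"
  have M12: "M12 = {pt. ordN 2 d12 pt > 0}"
    unfolding M12_def meet_points_def d12_def[symmetric] using nz by (auto simp: ordP_ordN enat_0_iff)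
  have M13: "M13 = {pt. ordN 2 d13 pt > 0}"
    unfolding M13_def meet_points_def d13_def[symmetric] using nz by (auto simp: ordP_ordN enat_0_iff)
  have M23: "M23 = {pt. ordN 2 d23 pt > 0}"
    unfolding M23_def meet_points_def d23_def[symmetric] using nz by (auto simp: ordP_ordN enat_0_iff)
  define S where "S = {pt. singular_fibre A B pt}"
  have S: "S = {pt. ordN 12 D pt > 0}"
    unfolding S_def singular_fibre_def D_def[symmetric] using Dnz by (auto simp: ordP_ordN enat_0_iff)
  have S2: "ordN 12 D pt = 2" if "pt \<in> S" for pt
  proof -
    have "fibre_I2 A B pt" using that allI2 S_def by blast
    then have "ordP 12 D pt = 2" by (simp add: fibre_I2_def D_def)
    then show ?thesis using Dnz by (simp add: ordP_ordN numeral_eq_enat)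
  qed
  have SU: "S = M12 \<union> M13 \<union> M23" unfolding S M12 M13 M23 key by auto
  have one: "ordN 2 d12 pt + ordN 2 d13 pt + ordN 2 d23 pt = 1" if "pt \<in> S" for pt
    using S2[OF that] key[of pt] by simp
  have dj1: "M12 \<inter> M13 = {}"
  proof (rule ccontr)
    assume "M12 \<inter> M13 \<noteq> {}"
    then obtain pt where "pt \<in> M12" "pt \<in> M13" by blast
    then show False using one[of pt] SU unfolding M12 M13 by auto
  qed
  have dj2: "M12 \<inter> M23 = {}"
  proof (rule ccontr)
    assume "M12 \<inter> M23 \<noteq> {}"
    then obtain pt where "pt \<in> M12" "pt \<in> M23" by blast
    then show False using one[of pt] SU unfolding M12 M23 by auto
  qed
  have dj3: "M13 \<inter> M23 = {}"
  proof (rule ccontr)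
    assume "M13 \<inter> M23 \<noteq> {}"
    then obtain pt where "pt \<in> M13" "pt \<in> M23" by blast
    then show False using one[of pt] SU unfolding M13 M23 by auto
  qed
  have c12: "finite M12 \<and> card M12 \<le> 2"
    using meet_card_le[OF nz(1) dg(1)] unfolding M12_def meet_points_def d12_def .
  have c13: "finite M13 \<and> card M13 \<le> 2"
    using meet_card_le[OF nz(2) dg(2)] unfolding M13_def meet_points_def d13_def .
  have c23: "finite M23 \<and> card M23 \<le> 2"
    using meet_card_le[OF nz(3) dg(3)] unfolding M23_def meet_points_def d23_def .
  have "card S = card M12 + card M13 + card M23"
    unfolding SU using c12 c13 c23 dj1 dj2 dj3
    by (subst card_Un_disjoint) (auto simp: card_Un_disjoint)
  moreover have "card S = 6" using six S_def by simp
  ultimately have cards: "card M12 = 2" "card M13 = 2" "card M23 = 2" using c12 c13 c23 by linarith+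
  have ne: "T1 \<noteq> T2" "T1 \<noteq> T3" "T2 \<noteq> T3" using nz unfolding d12_def d13_def d23_def by auto
  show ?thesis
    apply (rule exI[of _ T1], rule exI[of _ T2], rule exI[of _ T3])
    using deg1 deg2 deg3 ident ne cards dj1 SU \<open>card S = 6\<close>
    unfolding M12_def M13_def M23_def by auto
qed

end
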